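(* Let $\Gamma$ be a group and $S$ a $\Gamma$-graded inverse semigroup. Then there exist a nonempty set $X$ with a map $\deg:X\to\Gamma$ and an injective semigroup homomorphism $\psi:S\to\mathcal{I}^{\mathrm{gr}}(X)$ with $\psi(S_\alpha)\subseteq\mathcal{I}(X)_\alpha$ for all $\alpha\in\Gamma$.
   Context: Semigroups have a zero; $S$ is $\Gamma$-graded via $\deg:S\setminus\{0\}\to\Gamma$ with $\deg(st)=\deg(s)\deg(t)$ when $st\neq0$, $S_\alpha=\deg^{-1}(\alpha)\cup\{0\}$. For a set $X$, $\mathcal I(X)$ is the symmetric inverse monoid: bijections $\phi:A\to B$ between subsets of $X$, with $\mathrm{Dom}(\phi)=A$, composed as partial maps (the composite $\phi\psi$ has domain $\psi^{-1}(\mathrm{Im}\,\psi\cap\mathrm{Dom}\,\phi)$), with the empty map as zero. For $X$ with $\deg:X\to\Gamma$ put $X_\alpha=\deg^{-1}(\alpha)$ and, for $A\subseteq X$, $A_\alpha=A\cap X_\alpha$. Define $\mathcal I(X)_\alpha=\{\phi\in\mathcal I(X):\phi(\mathrm{Dom}(\phi)_\beta)\subseteq X_{\alpha\beta}\text{ for all }\beta\in\Gamma\}$ and $\mathcal I^{\mathrm{gr}}(X)=\bigcup_{\alpha\in\Gamma}\mathcal I(X)_\alpha$; this is a $\Gamma$-graded inverse subsemigroup of $\mathcal I(X)$ with components $\mathcal I(X)_\alpha$. *)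

theory Defs
  imports "HOL-Algebra.Group"
begin

definition semigroup_zero :: "'a set \<Rightarrow> ('a \<Rightarrow> 'a \<Rightarrow> 'a) \<Rightarrow> 'a \<Rightarrow> bool" where
  "semigroup_zero S m z \<longleftrightarrow>
     (\<forall>s\<in>S. \<forall>t\<in>S. m s t \<in> S) \<and>
     (\<forall>s\<in>S. \<forall>t\<in>S. \<forall>u\<in>S. m (m s t) u = m s (m t u)) \<and>
     z \<in> S \<and> (\<forall>s\<in>S. m z s = z \<and> m s z = z)"

definition inverse_semigroup :: "'a set \<Rightarrow> ('a \<Rightarrow> 'a \<Rightarrow> 'a) \<Rightarrow> 'a \<Rightarrow> bool" where
  "inverse_semigroup S m z \<longleftrightarrow> semigroup_zero S m z \<and>
     (\<forall>s\<in>S. \<exists>!t. t \<in> S \<and> m (m s t) s = s \<and> m (m t s) t = t)"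

definition graded :: "('g, 'b) monoid_scheme \<Rightarrow> 'a set \<Rightarrow> ('a \<Rightarrow> 'a \<Rightarrow> 'a) \<Rightarrow> 'a \<Rightarrow> ('a \<Rightarrow> 'g) \<Rightarrow> bool" where
  "graded G S m z deg \<longleftrightarrow>
     (\<forall>s\<in>S - {z}. deg s \<in> carrier G) \<and>
     (\<forall>s\<in>S. \<forall>t\<in>S. m s t \<noteq> z \<longrightarrow> deg (m s t) = deg s \<otimes>\<^bsub>G\<^esub> deg t)"

definition hcomp :: "'a set \<Rightarrow> 'a \<Rightarrow> ('a \<Rightarrow> 'g) \<Rightarrow> 'g \<Rightarrow> 'a set" where
  "hcomp S z deg \<alpha> = {s \<in> S - {z}. deg s = \<alpha>} \<union> {z}"

text \<open>Symmetric inverse monoid I(X): partial bijections between subsets of X, as partial maps.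
  Composition is map_comp (map_comp), the zero is the empty map.\<close>
definition sym_inv :: "'x set \<Rightarrow> ('x \<rightharpoonup> 'x) set" where
  "sym_inv X = {\<phi>. dom \<phi> \<subseteq> X \<and> ran \<phi> \<subseteq> X \<and> inj_on \<phi> (dom \<phi>)}"

definition sym_inv_comp :: "('g, 'b) monoid_scheme \<Rightarrow> 'x set \<Rightarrow> ('x \<Rightarrow> 'g) \<Rightarrow> 'g \<Rightarrow> ('x \<rightharpoonup> 'x) set" where
  "sym_inv_comp G X degX \<alpha> = {\<phi> \<in> sym_inv X.
     \<forall>\<beta>\<in>carrier G. \<forall>x\<in>dom \<phi>. degX x = \<beta> \<longrightarrow>
        (\<forall>y. \<phi> x = Some y \<longrightarrow> y \<in> X \<and> degX y = \<alpha> \<otimes>\<^bsub>G\<^esub> \<beta>)}"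

definition sym_inv_gr :: "('g, 'b) monoid_scheme \<Rightarrow> 'x set \<Rightarrow> ('x \<Rightarrow> 'g) \<Rightarrow> ('x \<rightharpoonup> 'x) set" where
  "sym_inv_gr G X degX = (\<Union>\<alpha>\<in>carrier G. sym_inv_comp G X degX \<alpha>)"

end

theory Submission
  imports Defs
begin

locale isg =
  fixes S :: "'a set" and mult :: "'a \<Rightarrow> 'a \<Rightarrow> 'a" (infixl "\<cdot>" 70) and z :: 'a
  assumes cl[simp]: "a\<in>S \<Longrightarrow> b\<in>S \<Longrightarrow> a\<cdot>b \<in> S"
  and assoc[simp]: "a\<in>S \<Longrightarrow> b\<in>S \<Longrightarrow> c\<in>S \<Longrightarrow> (a\<cdot>b)\<cdot>c = a\<cdot>(b\<cdot>c)"
  and zS[simp]: "z\<in>S" and zl[simp]: "a\<in>S \<Longrightarrow> z\<cdot>a = z" and zr[simp]: "a\<in>S \<Longrightarrow> a\<cdot>z = z"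
  and uinv: "a\<in>S \<Longrightarrow> \<exists>!b. b\<in>S \<and> a\<cdot>b\<cdot>a = a \<and> b\<cdot>a\<cdot>b = b"
begin

definition iv where "iv a = (THE b. b\<in>S \<and> a\<cdot>b\<cdot>a = a \<and> b\<cdot>a\<cdot>b = b)"

lemma iv_props: assumes "a\<in>S" shows "iv a \<in> S" "a\<cdot>iv a\<cdot>a = a" "iv a\<cdot>a\<cdot>iv a = iv a"
  using theI'[OF uinv[OF assms]] unfolding iv_def by auto

lemma iv_S[simp]: "a\<in>S \<Longrightarrow> iv a \<in> S" using iv_props by auto

lemma iv1[simp]: "a\<in>S \<Longrightarrow> a\<cdot>(iv a\<cdot>a) = a"
  using iv_props(2) by (metis assoc iv_S)
lemma iv1'[simp]: "a\<in>S \<Longrightarrow> w\<in>S \<Longrightarrow> a\<cdot>(iv a\<cdot>(a\<cdot>w)) = a\<cdot>w"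
  by (metis assoc iv1 iv_S cl)
lemma iv2[simp]: "a\<in>S \<Longrightarrow> iv a\<cdot>(a\<cdot>iv a) = iv a"
  using iv_props(3) by (metis assoc iv_S)
lemma iv2'[simp]: "a\<in>S \<Longrightarrow> w\<in>S \<Longrightarrow> iv a\<cdot>(a\<cdot>(iv a\<cdot>w)) = iv a\<cdot>w"
  by (metis assoc iv2 iv_S cl)

lemma iv_unique: "a\<in>S \<Longrightarrow> b\<in>S \<Longrightarrow> a\<cdot>b\<cdot>a = a \<Longrightarrow> b\<cdot>a\<cdot>b = b \<Longrightarrow> b = iv a"
  using uinv[of a] iv_props[of a] by blast

lemma idem_comm:
  assumes e: "e\<in>S" "e\<cdot>e = e" and f: "f\<in>S" "f\<cdot>f = f"
  shows "e\<cdot>f = f\<cdot>e"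
proof -
  have ee: "e\<cdot>(e\<cdot>w) = e\<cdot>w" if "w\<in>S" for w using e that by (metis assoc)
  have ff: "f\<cdot>(f\<cdot>w) = f\<cdot>w" if "w\<in>S" for w using f that by (metis assoc)
  have gen: "a\<cdot>b\<cdot>(a\<cdot>b) = a\<cdot>b" if a: "a\<in>S" "a\<cdot>a = a" and b: "b\<in>S" "b\<cdot>b = b" for a b
  proof -
    define x where "x = iv (a\<cdot>b)"
    have xS: "x\<in>S" using a b x_def by simp
    have aa: "a\<cdot>(a\<cdot>w) = a\<cdot>w" if "w\<in>S" for w using a that by (metis assoc)
    have bb: "b\<cdot>(b\<cdot>w) = b\<cdot>w" if "w\<in>S" for w using b that by (metis assoc)
    have x1: "a\<cdot>(b\<cdot>(x\<cdot>(a\<cdot>b))) = a\<cdot>b" using iv_props(2)[of "a\<cdot>b"] a b x_def by simp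
    have x2: "x\<cdot>(a\<cdot>(b\<cdot>x)) = x" using iv_props(3)[of "a\<cdot>b"] a b x_def by simp
    have "b\<cdot>x\<cdot>a = x"
    proof (unfold x_def, rule iv_unique)
      show "a \<cdot> b \<cdot> (b \<cdot> iv (a \<cdot> b) \<cdot> a) \<cdot> (a \<cdot> b) = a \<cdot> b"
        using x1 a b xS by (simp add: aa bb flip: x_def)
      show "b \<cdot> iv (a \<cdot> b) \<cdot> a \<cdot> (a \<cdot> b) \<cdot> (b \<cdot> iv (a \<cdot> b) \<cdot> a) = b \<cdot> iv (a \<cdot> b) \<cdot> a"
        using a b xS by (simp add: aa bb x2 flip: x_def) (metis a(1) assoc b(1) cl x2 xS)
    qed (use a b in auto)
    hence xx: "x\<cdot>x = x"
      by (metis a(1) assoc b(1) cl x2 xS)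
    have "a\<cdot>b = iv x"
      by (rule iv_unique) (use a b xS x1 x2 in \<open>simp_all\<close>)
    moreover have "x = iv x"
      by (rule iv_unique) (use xS xx in \<open>simp_all\<close>)
    ultimately show ?thesis using xx by simp
  qed
  have 1: "e\<cdot>f\<cdot>(e\<cdot>f) = e\<cdot>f" using gen e f by blast
  have 2: "f\<cdot>e\<cdot>(f\<cdot>e) = f\<cdot>e" using gen e f by blast
  have "f\<cdot>e = iv (e\<cdot>f)"
  proof (rule iv_unique)
    show "e \<cdot> f \<cdot> (f \<cdot> e) \<cdot> (e \<cdot> f) = e \<cdot> f"
    proof -
      have "e \<cdot> f \<cdot> (f \<cdot> e) \<cdot> (e \<cdot> f) = e \<cdot> (f \<cdot> (e \<cdot> f))" using e f by (simp add: ee ff)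
      also have "... = e\<cdot>f" using 1 e f by simp
      finally show ?thesis .
    qed
    show "f \<cdot> e \<cdot> (e \<cdot> f) \<cdot> (f \<cdot> e) = f \<cdot> e"
    proof -
      have "f \<cdot> e \<cdot> (e \<cdot> f) \<cdot> (f \<cdot> e) = f \<cdot> (e \<cdot> (f \<cdot> e))" using e f by (simp add: ee ff)
      also have "... = f\<cdot>e" using 2 e f by simp
      finally show ?thesis .
    qed
  qed (use e f in auto)
  moreover have "e\<cdot>f = iv (e\<cdot>f)"
    by (rule iv_unique) (use e f 1 in \<open>simp_all\<close>)
  ultimately show ?thesis by simp
qed

lemma iv_z[simp]: "iv z = z"
  by (rule iv_unique[symmetric]) auto

lemma iv_mult: assumes "a\<in>S" "b\<in>S" shows "iv (a\<cdot>b) = iv b\<cdot>iv a"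
proof -
  have c: "iv a\<cdot>(a\<cdot>(b\<cdot>(iv b\<cdot>w))) = b\<cdot>(iv b\<cdot>(iv a\<cdot>(a\<cdot>w)))" if "w\<in>S" for w
  proof -
    have "iv a\<cdot>a\<cdot>(b\<cdot>iv b) = b\<cdot>iv b\<cdot>(iv a\<cdot>a)"
      by (rule idem_comm) (use assms in simp_all)
    hence "iv a\<cdot>a\<cdot>(b\<cdot>iv b)\<cdot>w = b\<cdot>iv b\<cdot>(iv a\<cdot>a)\<cdot>w" by simp
    thus ?thesis using assms that by simp
  qed
  show ?thesis
  proof (rule iv_unique[symmetric])
    show "a \<cdot> b \<cdot> (iv b \<cdot> iv a) \<cdot> (a \<cdot> b) = a \<cdot> b"
    proof -
      have "a \<cdot> b \<cdot> (iv b \<cdot> iv a) \<cdot> (a \<cdot> b) = a\<cdot>(b\<cdot>(iv b\<cdot>(iv a\<cdot>(a\<cdot>b))))" using assms by simp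
      also have "... = a\<cdot>(iv a\<cdot>(a\<cdot>(b\<cdot>(iv b\<cdot>b))))" using c[of b] assms by simp
      also have "... = a\<cdot>b" using assms by simp
      finally show ?thesis .
    qed
    show "iv b \<cdot> iv a \<cdot> (a \<cdot> b) \<cdot> (iv b \<cdot> iv a) = iv b \<cdot> iv a"
    proof -
      have "iv b \<cdot> iv a \<cdot> (a \<cdot> b) \<cdot> (iv b \<cdot> iv a) = iv b\<cdot>(iv a\<cdot>(a\<cdot>(b\<cdot>(iv b\<cdot>iv a))))" using assms by simp
      also have "... = iv b\<cdot>(b\<cdot>(iv b\<cdot>(iv a\<cdot>(a\<cdot>iv a))))" using c[of "iv a"] assms by simp
      also have "... = iv b \<cdot> iv a" using assms by simp
      finally show ?thesis .
    qed
  qed (use assms in auto)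
qed

definition psi where
  "psi s = (\<lambda>x. if x\<in>S \<and> x\<noteq>z \<and> iv s\<cdot>(s\<cdot>x) = x then Some (s\<cdot>x) else None)"

lemma psi_hom: assumes s: "s\<in>S" and t: "t\<in>S" shows "psi (s\<cdot>t) = psi s \<circ>\<^sub>m psi t"
proof
  fix x
  have c: "iv s\<cdot>(s\<cdot>(t\<cdot>(iv t\<cdot>w))) = t\<cdot>(iv t\<cdot>(iv s\<cdot>(s\<cdot>w)))" if "w\<in>S" for w
  proof -
    have "iv s\<cdot>s\<cdot>(t\<cdot>iv t) = t\<cdot>iv t\<cdot>(iv s\<cdot>s)"
      by (rule idem_comm) (use s t in simp_all)
    hence "iv s\<cdot>s\<cdot>(t\<cdot>iv t)\<cdot>w = t\<cdot>iv t\<cdot>(iv s\<cdot>s)\<cdot>w" by simp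
    thus ?thesis using s t that by simp
  qed
  show "psi (s\<cdot>t) x = (psi s \<circ>\<^sub>m psi t) x"
  proof (cases "x\<in>S \<and> x\<noteq>z")
    case False thus ?thesis by (auto simp: psi_def map_comp_def)
  next
    case True
    hence x: "x\<in>S" "x\<noteq>z" by auto
    have eq: "iv (s\<cdot>t)\<cdot>(s\<cdot>t\<cdot>x) = iv t\<cdot>(iv s\<cdot>(s\<cdot>(t\<cdot>x)))" using s t x by (simp add: iv_mult)
    have "(iv t\<cdot>(iv s\<cdot>(s\<cdot>(t\<cdot>x))) = x) \<longleftrightarrow>
          (iv t\<cdot>(t\<cdot>x) = x \<and> t\<cdot>x \<noteq> z \<and> iv s\<cdot>(s\<cdot>(t\<cdot>x)) = t\<cdot>x)"
    proof
      assume h: "iv t\<cdot>(iv s\<cdot>(s\<cdot>(t\<cdot>x))) = x"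
      have h1: "iv t\<cdot>(t\<cdot>x) = x"
      proof -
        have "iv t\<cdot>(t\<cdot>x) = iv t\<cdot>(t\<cdot>(iv t\<cdot>(iv s\<cdot>(s\<cdot>(t\<cdot>x)))))" by (simp only: h)
        also have "... = iv t\<cdot>(iv s\<cdot>(s\<cdot>(t\<cdot>x)))" using s t x by simp
        also have "... = x" by (rule h)
        finally show ?thesis .
      qed
      have h2: "t\<cdot>x \<noteq> z"
      proof
        assume "t\<cdot>x = z" thus False using h s t x by simp
      qed
      define w where "w = iv s\<cdot>(s\<cdot>(t\<cdot>x))"
      have wS: "w\<in>S" using s t x w_def by simp
      have tx: "t\<cdot>x = t\<cdot>(iv t\<cdot>w)" using h w_def by simp
      have "iv s\<cdot>(s\<cdot>(t\<cdot>x)) = t\<cdot>(iv t\<cdot>(iv s\<cdot>(s\<cdot>w)))" using tx c[OF wS] by simp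
      also have "iv s\<cdot>(s\<cdot>w) = w" using w_def s t x by simp
      finally have h3: "iv s\<cdot>(s\<cdot>(t\<cdot>x)) = t\<cdot>x" using tx by simp
      show "iv t\<cdot>(t\<cdot>x) = x \<and> t\<cdot>x \<noteq> z \<and> iv s\<cdot>(s\<cdot>(t\<cdot>x)) = t\<cdot>x" using h1 h2 h3 by blast
    next
      assume "iv t\<cdot>(t\<cdot>x) = x \<and> t\<cdot>x \<noteq> z \<and> iv s\<cdot>(s\<cdot>(t\<cdot>x)) = t\<cdot>x"
      thus "iv t\<cdot>(iv s\<cdot>(s\<cdot>(t\<cdot>x))) = x" by simp
    qed
    thus ?thesis using x s t eq by (auto simp: psi_def map_comp_def)
  qed
qed

lemma psi_z: "psi z = Map.empty"
  by (auto simp: psi_def)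

lemma psi_inj: "inj_on psi S"
proof
  fix s t assume s: "s\<in>S" and t: "t\<in>S" and e: "psi s = psi t"
  have key: "iv t\<cdot>(t\<cdot>(iv a\<cdot>a)) = iv a\<cdot>a \<and> t\<cdot>(iv a\<cdot>a) = a"
    if a: "a\<in>S" "a\<noteq>z" and t: "t\<in>S" and e: "psi a = psi t" for a t
  proof -
    have nz: "iv a\<cdot>a \<noteq> z"
    proof
      assume "iv a\<cdot>a = z" hence "a\<cdot>(iv a\<cdot>a) = z" using a by simp
      thus False using a by simp
    qed
    have "psi a (iv a\<cdot>a) = Some (a\<cdot>(iv a\<cdot>a))" using a nz by (simp add: psi_def)
    hence "psi t (iv a\<cdot>a) = Some a" using e a by simp
    thus ?thesis by (auto simp: psi_def split: if_splits)
  qed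
  show "s = t"
  proof (cases "s = z \<or> t = z")
    case True
    then show ?thesis
    proof
      assume sz: "s = z"
      show ?thesis proof (rule ccontr)
        assume "s \<noteq> t" hence "t\<noteq>z" using sz by simp
        from key[OF t this s e[symmetric]] sz have "z\<cdot>(iv t\<cdot>t) = t" by simp
        thus False using t \<open>t\<noteq>z\<close> by simp
      qed
    next
      assume tz: "t = z"
      show ?thesis proof (rule ccontr)
        assume "s \<noteq> t" hence "s\<noteq>z" using tz by simp
        from key[OF s this t e] tz have "z\<cdot>(iv s\<cdot>s) = s" by simp
        thus False using s \<open>s\<noteq>z\<close> by simp
      qed
    qed
  next
    case False
    have k1: "iv t\<cdot>(t\<cdot>(iv s\<cdot>s)) = iv s\<cdot>s \<and> t\<cdot>(iv s\<cdot>s) = s" using key[OF s _ t e] False by blast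
    have k2: "iv s\<cdot>(s\<cdot>(iv t\<cdot>t)) = iv t\<cdot>t \<and> s\<cdot>(iv t\<cdot>t) = t" using key[OF t _ s e[symmetric]] False by blast
    have "iv s\<cdot>s\<cdot>(iv t\<cdot>t) = iv t\<cdot>t\<cdot>(iv s\<cdot>s)"
      by (rule idem_comm) (use s t in simp_all)
    moreover have "iv s\<cdot>s\<cdot>(iv t\<cdot>t) = iv t\<cdot>t" using k2 s t by (metis assoc iv_S cl)
    moreover have "iv t\<cdot>t\<cdot>(iv s\<cdot>s) = iv s\<cdot>s" using k1 s t by (metis assoc iv_S cl)
    ultimately have "iv s\<cdot>s = iv t\<cdot>t" by simp
    thus ?thesis using k1 k2 s t by (metis iv1 assoc iv_S)
  qed
qed

lemma psi_dom: assumes "psi s x = Some y" "s\<in>S" shows "x\<in>S \<and> x\<noteq>z \<and> y = s\<cdot>x \<and> y\<in>S \<and> y\<noteq>z"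
proof -
  have h: "x\<in>S" "x\<noteq>z" "iv s\<cdot>(s\<cdot>x) = x" "y = s\<cdot>x" using assms by (auto simp: psi_def split: if_splits)
  have "s\<cdot>x \<noteq> z" proof assume "s\<cdot>x = z" thus False using h assms by (metis zr iv_S) qed
  thus ?thesis using h assms by simp
qed

lemma psi_inj1: "s\<in>S \<Longrightarrow> inj_on (psi s) (dom (psi s))"
proof (rule inj_onI)
  fix x y assume "s\<in>S" "x \<in> dom (psi s)" "y \<in> dom (psi s)" "psi s x = psi s y"
  then obtain u where "psi s x = Some u" "psi s y = Some u" by auto
  hence "iv s\<cdot>(s\<cdot>x) = x" "iv s\<cdot>(s\<cdot>y) = y" "s\<cdot>x = u" "s\<cdot>y = u" by (auto simp: psi_def split: if_splits)
  thus "x = y" by metis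
qed

end

theorem proposition5p4:
  fixes G :: "('g, 'b) monoid_scheme"
    and S :: "'a set" and m :: "'a \<Rightarrow> 'a \<Rightarrow> 'a" and z :: 'a and deg :: "'a \<Rightarrow> 'g"
  assumes "group G"
    and "inverse_semigroup S m z"
    and "graded G S m z deg"
  shows "\<exists>(X :: 'a set) (degX :: 'a \<Rightarrow> 'g) (\<psi> :: 'a \<Rightarrow> ('a \<rightharpoonup> 'a)).
           X \<noteq> {} \<and> (\<forall>x\<in>X. degX x \<in> carrier G) \<and>
           (\<forall>s\<in>S. \<psi> s \<in> sym_inv_gr G X degX) \<and>
           inj_on \<psi> S \<and>
           (\<forall>s\<in>S. \<forall>t\<in>S. \<psi> (m s t) = \<psi> s \<circ>\<^sub>m \<psi> t) \<and>
           (\<forall>\<alpha>\<in>carrier G. \<psi> ` hcomp S z deg \<alpha> \<subseteq> sym_inv_comp G X degX \<alpha>)"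
proof -
  interpret I: isg S m z
    using assms(2) unfolding inverse_semigroup_def semigroup_zero_def
    by unfold_locales auto
  have gr1: "\<And>s. s\<in>S \<Longrightarrow> s\<noteq>z \<Longrightarrow> deg s \<in> carrier G"
    and gr2: "\<And>s t. s\<in>S \<Longrightarrow> t\<in>S \<Longrightarrow> m s t \<noteq> z \<Longrightarrow> deg (m s t) = deg s \<otimes>\<^bsub>G\<^esub> deg t"
    using assms(3) unfolding graded_def by auto
  define degX where "degX = (\<lambda>x. if x = z then \<one>\<^bsub>G\<^esub> else deg x)"
  have dX: "\<forall>x\<in>S. degX x \<in> carrier G"
    using gr1 assms(1) by (auto simp: degX_def group.is_monoid monoid.one_closed)
  have si: "I.psi s \<in> sym_inv S" if "s\<in>S" for s
    unfolding sym_inv_def using I.psi_dom[OF _ that] I.psi_inj1[OF that]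
    by (auto simp: ran_def)
  have empty: "Map.empty \<in> sym_inv_comp G S degX \<alpha>" for \<alpha>
    by (auto simp: sym_inv_comp_def sym_inv_def)
  have comp: "I.psi s \<in> sym_inv_comp G S degX (deg s)" if s: "s\<in>S" "s\<noteq>z" for s
  proof -
    have "degX y = deg s \<otimes>\<^bsub>G\<^esub> degX x" if "I.psi s x = Some y" for x y
    proof -
      have "x\<in>S \<and> x\<noteq>z \<and> y = m s x \<and> y\<in>S \<and> y\<noteq>z" using I.psi_dom[OF that s(1)] .
      thus ?thesis using gr2[of s x] s by (auto simp: degX_def)
    qed
    thus ?thesis using si[OF s(1)] I.psi_dom[OF _ s(1)] by (auto simp: sym_inv_comp_def)
  qed
  show ?thesis
  proof (intro exI conjI)
    show "S \<noteq> {}" using I.zS by blast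
    show "\<forall>x\<in>S. degX x \<in> carrier G" by (rule dX)
    show "\<forall>s\<in>S. I.psi s \<in> sym_inv_gr G S degX"
    proof
      fix s assume s: "s\<in>S"
      show "I.psi s \<in> sym_inv_gr G S degX"
      proof (cases "s = z")
        case True
        thus ?thesis using empty assms(1) unfolding sym_inv_gr_def
          by (auto simp: I.psi_z intro!: monoid.one_closed group.is_monoid)
      next
        case False
        thus ?thesis using comp[OF s False] gr1[OF s False] unfolding sym_inv_gr_def by auto
      qed
    qed
    show "inj_on I.psi S" by (rule I.psi_inj)
    show "\<forall>s\<in>S. \<forall>t\<in>S. I.psi (m s t) = I.psi s \<circ>\<^sub>m I.psi t" using I.psi_hom by blast
    show "\<forall>\<alpha>\<in>carrier G. I.psi ` hcomp S z deg \<alpha> \<subseteq> sym_inv_comp G S degX \<alpha>"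
      using comp empty by (auto simp: hcomp_def I.psi_z)
  qed
qed

end
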